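(* Let $G$ and $H$ be connected graphs. If $\mathcal{S}(G)$ is an independent set of $G$ and $\mu_t(G)=|\mathcal{S}(G)|$, then $$\mu_t(G\,\Box\,H)=\mu_t(G)\,\mu_t(H).$$
   Context: All graphs are finite, simple and undirected. The Cartesian product $G\,\Box\,H$ has vertex set $V(G)\times V(H)$, with $(x,y)$ adjacent to $(x',y')$ iff either $x=x'$ and $yy'\in E(H)$, or $xx'\in E(G)$ and $y=y'$. Let $F$ be a connected graph and $X\subseteq V(F)$. Two vertices $x,y\in V(F)$ are $X$-visible if there exists a shortest $x,y$-path in $F$ none of whose internal vertices belongs to $X$. $X$ is a total mutual-visibility set of $F$ if every two vertices of $F$ are $X$-visible (the empty set is allowed). $\mu_t(F)$ is the maximum cardinality of a total mutual-visibility set of $F$. A vertex is simplicial if its neighbors induce a complete graph; $\mathcal{S}(F)$ is the set of simplicial vertices of $F$. *)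

theory Defs
  imports Main
begin

definition graph :: "'a set \<Rightarrow> ('a \<Rightarrow> 'a \<Rightarrow> bool) \<Rightarrow> bool" where
  "graph V E \<longleftrightarrow> finite V \<and> (\<forall>x y. E x y \<longrightarrow> x \<in> V \<and> y \<in> V)
     \<and> (\<forall>x y. E x y \<longrightarrow> E y x) \<and> (\<forall>x. \<not> E x x)"

definition walk :: "'a set \<Rightarrow> ('a \<Rightarrow> 'a \<Rightarrow> bool) \<Rightarrow> 'a list \<Rightarrow> bool" where
  "walk V E p \<longleftrightarrow> p \<noteq> [] \<and> set p \<subseteq> V \<and>
     (\<forall>i. Suc i < length p \<longrightarrow> E (p ! i) (p ! Suc i))"

definition connected_graph :: "'a set \<Rightarrow> ('a \<Rightarrow> 'a \<Rightarrow> bool) \<Rightarrow> bool" where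
  "connected_graph V E \<longleftrightarrow> graph V E \<and> V \<noteq> {} \<and>
     (\<forall>x\<in>V. \<forall>y\<in>V. \<exists>p. walk V E p \<and> hd p = x \<and> last p = y)"

text \<open>Distance = number of edges of a shortest walk.\<close>
definition gdist :: "'a set \<Rightarrow> ('a \<Rightarrow> 'a \<Rightarrow> bool) \<Rightarrow> 'a \<Rightarrow> 'a \<Rightarrow> nat" where
  "gdist V E x y = (LEAST n. \<exists>p. walk V E p \<and> hd p = x \<and> last p = y \<and> length p = Suc n)"

definition shortest_path :: "'a set \<Rightarrow> ('a \<Rightarrow> 'a \<Rightarrow> bool) \<Rightarrow> 'a \<Rightarrow> 'a \<Rightarrow> 'a list \<Rightarrow> bool" where
  "shortest_path V E x y p \<longleftrightarrow> walk V E p \<and> hd p = x \<and> last p = y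
     \<and> length p = Suc (gdist V E x y)"

definition internal :: "'a list \<Rightarrow> 'a set" where
  "internal p = set (butlast (tl p))"

definition X_visible :: "'a set \<Rightarrow> ('a \<Rightarrow> 'a \<Rightarrow> bool) \<Rightarrow> 'a set \<Rightarrow> 'a \<Rightarrow> 'a \<Rightarrow> bool" where
  "X_visible V E X x y \<longleftrightarrow> (\<exists>p. shortest_path V E x y p \<and> internal p \<inter> X = {})"

definition total_mv_set :: "'a set \<Rightarrow> ('a \<Rightarrow> 'a \<Rightarrow> bool) \<Rightarrow> 'a set \<Rightarrow> bool" where
  "total_mv_set V E X \<longleftrightarrow> X \<subseteq> V \<and> (\<forall>x\<in>V. \<forall>y\<in>V. X_visible V E X x y)"

definition mu_t :: "'a set \<Rightarrow> ('a \<Rightarrow> 'a \<Rightarrow> bool) \<Rightarrow> nat" where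
  "mu_t V E = Max (card ` {X. total_mv_set V E X})"

definition simplicial :: "'a set \<Rightarrow> ('a \<Rightarrow> 'a \<Rightarrow> bool) \<Rightarrow> 'a \<Rightarrow> bool" where
  "simplicial V E v \<longleftrightarrow> v \<in> V \<and>
     (\<forall>x y. E v x \<and> E v y \<and> x \<noteq> y \<longrightarrow> E x y)"

definition simplicial_set :: "'a set \<Rightarrow> ('a \<Rightarrow> 'a \<Rightarrow> bool) \<Rightarrow> 'a set" where
  "simplicial_set V E = {v. simplicial V E v}"

definition independent_set :: "'a set \<Rightarrow> ('a \<Rightarrow> 'a \<Rightarrow> bool) \<Rightarrow> 'a set \<Rightarrow> bool" where
  "independent_set V E S \<longleftrightarrow> S \<subseteq> V \<and> (\<forall>x\<in>S. \<forall>y\<in>S. \<not> E x y)"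

definition cart_V :: "'a set \<Rightarrow> 'b set \<Rightarrow> ('a \<times> 'b) set" where
  "cart_V VG VH = VG \<times> VH"

definition cart_E :: "('a \<Rightarrow> 'a \<Rightarrow> bool) \<Rightarrow> ('b \<Rightarrow> 'b \<Rightarrow> bool)
    \<Rightarrow> 'a \<times> 'b \<Rightarrow> 'a \<times> 'b \<Rightarrow> bool" where
  "cart_E EG EH = (\<lambda>(x, y) (x', y'). (x = x' \<and> EH y y') \<or> (EG x x' \<and> y = y'))"

end

theory Submission imports Defs begin

lemma walk_single[simp]: "walk V E [x] \<longleftrightarrow> x \<in> V"
  unfolding walk_def by auto

lemma walk_Cons2[simp]: "walk V E (x # y # p) \<longleftrightarrow> x \<in> V \<and> E x y \<and> walk V E (y # p)"
proof
  assume w: "walk V E (x # y # p)"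
  then have "x \<in> V" "E x y" unfolding walk_def by (auto dest: spec[of _ 0])
  moreover have "walk V E (y # p)"
    unfolding walk_def
  proof (intro conjI allI impI)
    show "set (y # p) \<subseteq> V" using w unfolding walk_def by auto
    fix i assume "Suc i < length (y # p)"
    then have "Suc (Suc i) < length (x # y # p)" by simp
    then have "E ((x#y#p) ! Suc i) ((x#y#p) ! Suc (Suc i))" using w unfolding walk_def by blast
    then show "E ((y # p) ! i) ((y # p) ! Suc i)" by simp
  qed simp
  ultimately show "x \<in> V \<and> E x y \<and> walk V E (y # p)" by blast
next
  assume a: "x \<in> V \<and> E x y \<and> walk V E (y # p)"
  show "walk V E (x # y # p)"
    unfolding walk_def
  proof (intro conjI allI impI)
    show "set (x # y # p) \<subseteq> V" using a unfolding walk_def by auto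
    fix i assume i: "Suc i < length (x # y # p)"
    show "E ((x # y # p) ! i) ((x # y # p) ! Suc i)"
    proof (cases i)
      case 0 then show ?thesis using a by simp
    next
      case (Suc j)
      then have "Suc j < length (y # p)" using i by simp
      then have "E ((y#p) ! j) ((y#p) ! Suc j)" using a unfolding walk_def by blast
      then show ?thesis using Suc by simp
    qed
  qed simp
qed

lemma walk_nonempty: "walk V E p \<Longrightarrow> p \<noteq> []"
  unfolding walk_def by auto

lemma walk_set: "walk V E p \<Longrightarrow> set p \<subseteq> V"
  unfolding walk_def by auto

lemma walk_append:
  assumes "xs \<noteq> []" "ys \<noteq> []"
  shows "walk V E (xs @ ys) \<longleftrightarrow> walk V E xs \<and> walk V E ys \<and> E (last xs) (hd ys)"
  using assms
proof (induction xs)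
  case Nil then show ?case by simp
next
  case (Cons a xs)
  then show ?case
  proof (cases xs)
    case Nil
    then show ?thesis using Cons.prems by (cases ys) auto
  next
    case (Cons b xs')
    then show ?thesis using Cons.IH Cons.prems by auto
  qed
qed

lemma walk_map:
  assumes "walk V E p" "\<And>x. x \<in> V \<Longrightarrow> f x \<in> V'" "\<And>x y. E x y \<Longrightarrow> E' (f x) (f y)"
  shows "walk V' E' (map f p)"
  using assms unfolding walk_def by auto

lemma gdist_le:
  assumes "walk V E p" "hd p = x" "last p = y"
  shows "gdist V E x y \<le> length p - 1"
proof -
  have "p \<noteq> []" using assms(1) walk_nonempty by auto
  then have "length p = Suc (length p - 1)" by simp
  then have "\<exists>q. walk V E q \<and> hd q = x \<and> last q = y \<and> length q = Suc (length p - 1)"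
    using assms by blast
  then show ?thesis unfolding gdist_def by (rule Least_le)
qed

lemma exists_shortest:
  assumes "walk V E p" "hd p = x" "last p = y"
  shows "\<exists>q. shortest_path V E x y q"
proof -
  have "p \<noteq> []" using assms(1) walk_nonempty by auto
  then have "\<exists>n. \<exists>q. walk V E q \<and> hd q = x \<and> last q = y \<and> length q = Suc n"
    using assms by (intro exI[of _ "length p - 1"] exI[of _ p]) simp
  then have "\<exists>q. walk V E q \<and> hd q = x \<and> last q = y \<and> length q = Suc (gdist V E x y)"
    unfolding gdist_def by (rule LeastI_ex)
  then show ?thesis unfolding shortest_path_def by blast
qed

lemma shortest_min:
  assumes "shortest_path V E x y p" "walk V E q" "hd q = x" "last q = y"
  shows "length p \<le> length q"
proof -
  have "length q > 0" using walk_nonempty[OF assms(2)] by simp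
  then show ?thesis
    using gdist_le[OF assms(2-4)] assms(1) unfolding shortest_path_def by linarith
qed

lemma connected_shortest:
  assumes "connected_graph V E" "x \<in> V" "y \<in> V"
  shows "\<exists>p. shortest_path V E x y p"
  using assms exists_shortest unfolding connected_graph_def by metis

lemma gdist_refl: "x \<in> V \<Longrightarrow> gdist V E x x = 0"
  using gdist_le[of V E "[x]" x x] by simp

lemma simplicial_not_internal:
  assumes g: "graph V E" and sp: "shortest_path V E x y p" and v: "v \<in> internal p"
  shows "\<not> simplicial V E v"
proof
  assume sv: "simplicial V E v"
  have w: "walk V E p" and hx: "hd p = x" and ly: "last p = y"
    using sp unfolding shortest_path_def by auto
  obtain a0 p' where p: "p = a0 # p'" using w walk_nonempty by (cases p) auto
  have "v \<in> set (butlast p')" using v p unfolding internal_def by simp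
  then have "p' \<noteq> []" by auto
  then have p'eq: "p' = butlast p' @ [last p']" by simp
  obtain us ts where "butlast p' = us @ v # ts"
    using \<open>v \<in> set (butlast p')\<close> split_list by metis
  then have "p = (a0 # us) @ v # (ts @ [last p'])" using p p'eq by simp
  then obtain xs ys where pe: "p = xs @ v # ys" and xne: "xs \<noteq> []" and yne: "ys \<noteq> []" by blast
  have wxs: "walk V E xs" and wv: "walk V E (v # ys)" and e1: "E (last xs) v"
    using w walk_append[OF xne, of "v # ys" V E] pe by auto
  obtain b ys' where ys: "ys = b # ys'" using yne by (cases ys) auto
  have e2: "E v b" and wys: "walk V E ys" using wv ys by auto
  have e1': "E v (last xs)" using e1 g unfolding graph_def by blast
  have hq: "hd (xs @ anything) = x" for anything using hx pe xne by simp
  show False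
  proof (cases "last xs = b")
    case True
    define q where "q = xs @ ys'"
    have "walk V E q"
    proof (cases ys')
      case Nil then show ?thesis using wxs q_def by simp
    next
      case (Cons c zs)
      then show ?thesis using wxs wys ys True walk_append[OF xne, of ys' V E] q_def by auto
    qed
    moreover have "last q = y"
      using ly pe ys True xne unfolding q_def by (cases ys') auto
    moreover have "hd q = x" using hq q_def by simp
    ultimately have "length p \<le> length q" using shortest_min[OF sp] by blast
    then show False using pe ys q_def by simp
  next
    case False
    define q where "q = xs @ ys"
    have "E (last xs) b" using sv e1' e2 False unfolding simplicial_def by blast
    then have "walk V E q" using wxs wys ys walk_append[OF xne yne] q_def by auto
    moreover have "last q = y" using ly pe yne unfolding q_def by simp
    moreover have "hd q = x" using hq q_def by simp
    ultimately have "length p \<le> length q" using shortest_min[OF sp] by blast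
    then show False using pe q_def by simp
  qed
qed


lemma cart_E_iff[simp]: "cart_E EG EH (a, b) (c, d) \<longleftrightarrow> (a = c \<and> EH b d) \<or> (EG a c \<and> b = d)"
  by (simp add: cart_E_def)

lemma cart_V_iff[simp]: "(a, b) \<in> cart_V VG VH \<longleftrightarrow> a \<in> VG \<and> b \<in> VH"
  by (simp add: cart_V_def)

lemma internal_map: "internal (map f p) = f ` internal p"
  unfolding internal_def by (simp add: map_butlast[symmetric] map_tl[symmetric])

lemma set_tl_sub: "x \<in> set (tl l) \<Longrightarrow> x \<in> set l"
  by (cases l) auto

lemma set_butlast_sub: "x \<in> set (butlast l) \<Longrightarrow> x \<in> set l"
  by (rule in_set_butlastD)

lemma internal_app3: "set (butlast (tl (xs @ ys @ zs))) \<subseteq> set (tl xs) \<union> set ys \<union> set (butlast zs)"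
  by (cases xs; cases ys; cases zs) (auto simp: butlast_append butlast_tl[symmetric] dest: set_butlast_sub set_tl_sub)

lemma internal_split: "set (tl P1) \<union> set (butlast P2) \<subseteq> internal (P1 @ u # P2)"
  unfolding internal_def by (cases P1; cases "P2 = []") (auto simp: butlast_append)

definition route :: "'a list \<Rightarrow> 'a \<Rightarrow> 'a list \<Rightarrow> 'b list \<Rightarrow> ('a \<times> 'b) list" where
  "route P1 u P2 Q = map (\<lambda>a. (a, hd Q)) P1 @ map (\<lambda>b. (u, b)) Q @ map (\<lambda>a. (a, last Q)) P2"

lemma route_walk:
  assumes wP: "walk VG EG (P1 @ u # P2)" and wQ: "walk VH EH Q"
  shows "walk (cart_V VG VH) (cart_E EG EH) (route P1 u P2 Q)"
proof -
  have Qne: "Q \<noteq> []" using wQ walk_nonempty by auto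
  have hV: "hd Q \<in> VH" "last Q \<in> VH" using wQ Qne walk_set by fastforce+
  have wuP2: "walk VG EG (u # P2)" and uV: "u \<in> VG"
    using wP walk_append[of P1 "u # P2"] walk_set by (cases "P1 = []"; force)+
  have wQ': "walk (cart_V VG VH) (cart_E EG EH) (map (\<lambda>b. (u, b)) Q)"
    by (rule walk_map[OF wQ]) (auto simp: uV)
  have A: "walk (cart_V VG VH) (cart_E EG EH) (map (\<lambda>b. (u, b)) Q @ map (\<lambda>a. (a, last Q)) P2)"
  proof (cases "P2 = []")
    case True then show ?thesis using wQ' by simp
  next
    case False
    then obtain c P2' where P2: "P2 = c # P2'" by (cases P2) auto
    have "walk VG EG P2" "EG u c" using wuP2 P2 by auto
    moreover have "walk (cart_V VG VH) (cart_E EG EH) (map (\<lambda>a. (a, last Q)) P2)"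
      by (rule walk_map[OF \<open>walk VG EG P2\<close>]) (auto simp: hV)
    ultimately show ?thesis using wQ' Qne P2
      by (subst walk_append) (auto simp: last_map)
  qed
  show ?thesis
  proof (cases "P1 = []")
    case True then show ?thesis using A by (simp add: route_def)
  next
    case False
    have "walk VG EG P1" "EG (last P1) u" using wP walk_append[OF False, of "u # P2"] by auto
    moreover have "walk (cart_V VG VH) (cart_E EG EH) (map (\<lambda>a. (a, hd Q)) P1)"
      by (rule walk_map[OF \<open>walk VG EG P1\<close>]) (auto simp: hV)
    ultimately show ?thesis using A Qne False unfolding route_def
      by (subst walk_append) (auto simp: last_map hd_map)
  qed
qed

lemma route_hd: "Q \<noteq> [] \<Longrightarrow> hd (route P1 u P2 Q) = (hd (P1 @ u # P2), hd Q)"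
  unfolding route_def by (cases P1) (auto simp: hd_map)

lemma route_last: "Q \<noteq> [] \<Longrightarrow> last (route P1 u P2 Q) = (last (P1 @ u # P2), last Q)"
  unfolding route_def by (cases "P2 = []") (auto simp: last_map)

lemma route_length: "length (route P1 u P2 Q) = length P1 + length Q + length P2"
  unfolding route_def by simp

lemma route_internal: "fst ` internal (route P1 u P2 Q) \<subseteq> set (tl P1) \<union> {u} \<union> set (butlast P2)"
proof -
  have "internal (route P1 u P2 Q) \<subseteq> set (tl (map (\<lambda>a. (a, hd Q)) P1)) \<union> set (map (\<lambda>b. (u, b)) Q)
     \<union> set (butlast (map (\<lambda>a. (a, last Q)) P2))"
    unfolding internal_def route_def by (rule internal_app3)
  then show ?thesis by (auto simp: map_tl[symmetric] map_butlast[symmetric])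
qed

lemma proj:
  assumes "walk (cart_V VG VH) (cart_E EG EH) p"
  shows "\<exists>pg ph. walk VG EG pg \<and> walk VH EH ph \<and> hd pg = fst (hd p) \<and> last pg = fst (last p)
    \<and> hd ph = snd (hd p) \<and> last ph = snd (last p) \<and> length pg + length ph = Suc (length p)
    \<and> (length ph = 1 \<longrightarrow> pg = map fst p \<and> (\<forall>v\<in>set p. snd v = snd (hd p)))
    \<and> (length pg = 1 \<longrightarrow> ph = map snd p \<and> (\<forall>v\<in>set p. fst v = fst (hd p)))"
  using assms
proof (induction p rule: induct_list012)
  case 1 then show ?case by (simp add: walk_def)
next
  case (2 x)
  obtain a b where x: "x = (a, b)" by force
  show ?case using 2 x by (intro exI[of _ "[a]"] exI[of _ "[b]"]) auto
next
  case (3 x y zs)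
  obtain a b where x: "x = (a, b)" by force
  obtain c d where y: "y = (c, d)" by force
  have xV: "a \<in> VG" "b \<in> VH" and e: "cart_E EG EH x y" and wy: "walk (cart_V VG VH) (cart_E EG EH) (y # zs)"
    using 3(3) x by auto
  from 3(2)[OF wy] obtain pg ph where IH: "walk VG EG pg \<and> walk VH EH ph \<and> hd pg = fst (hd (y#zs)) \<and> last pg = fst (last (y#zs))
    \<and> hd ph = snd (hd (y#zs)) \<and> last ph = snd (last (y#zs)) \<and> length pg + length ph = Suc (length (y#zs))
    \<and> (length ph = 1 \<longrightarrow> pg = map fst (y#zs) \<and> (\<forall>v\<in>set (y#zs). snd v = snd (hd (y#zs))))
    \<and> (length pg = 1 \<longrightarrow> ph = map snd (y#zs) \<and> (\<forall>v\<in>set (y#zs). fst v = fst (hd (y#zs))))" by blast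
  have pgne: "pg \<noteq> []" and phne: "ph \<noteq> []" using IH walk_nonempty by auto
  then obtain g1 pg' h1 ph' where pg: "pg = g1 # pg'" and ph: "ph = h1 # ph'"
    by (cases pg; cases ph) auto
  from e x y consider "a = c" "EH b d" | "EG a c" "b = d" by auto
  then show ?case
  proof cases
    case 1
    show ?thesis
      apply (rule exI[of _ pg], rule exI[of _ "b # ph"])
      using IH 1 x y pg ph xV by auto
  next
    case 2
    show ?thesis
      apply (rule exI[of _ "a # pg"], rule exI[of _ ph])
      using IH 2 x y pg ph xV by auto
  qed
qed


lemma internal_sub: "internal p \<subseteq> set p"
  unfolding internal_def by (auto dest: set_butlast_sub set_tl_sub)

lemma gdist_prod:
  assumes cG: "connected_graph VG EG" and cH: "connected_graph VH EH"
    and g: "g \<in> VG" "g' \<in> VG" and h: "h \<in> VH" "h' \<in> VH"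
  shows "gdist (cart_V VG VH) (cart_E EG EH) (g, h) (g', h') = gdist VG EG g g' + gdist VH EH h h'"
proof -
  obtain P where P: "shortest_path VG EG g g' P" using connected_shortest[OF cG g] by blast
  obtain Q where Q: "shortest_path VH EH h h' Q" using connected_shortest[OF cH h] by blast
  have wP: "walk VG EG P" and hP: "hd P = g" and lP: "last P = g'" and lenP: "length P = Suc (gdist VG EG g g')"
    using P unfolding shortest_path_def by auto
  have wQ: "walk VH EH Q" and hQ: "hd Q = h" and lQ: "last Q = h'" and lenQ: "length Q = Suc (gdist VH EH h h')"
    using Q unfolding shortest_path_def by auto
  have Pne: "P \<noteq> []" and Qne: "Q \<noteq> []" using wP wQ walk_nonempty by auto
  have Peq: "[] @ g # tl P = P" using Pne hP by (cases P) auto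
  define R where "R = route [] g (tl P) Q"
  have wR: "walk (cart_V VG VH) (cart_E EG EH) R"
    unfolding R_def by (rule route_walk) (use wP wQ Peq in auto)
  have "hd R = (hd ([] @ g # tl P), hd Q)" "last R = (last ([] @ g # tl P), last Q)"
    unfolding R_def by (simp only: route_hd[OF Qne], simp only: route_last[OF Qne])
  then have hR: "hd R = (g, h)" and lR: "last R = (g', h')"
    unfolding Peq using hP lP hQ lQ by auto
  have lenR: "length R = Suc (gdist VG EG g g' + gdist VH EH h h')"
    unfolding R_def route_length using lenP lenQ by simp
  have le: "gdist (cart_V VG VH) (cart_E EG EH) (g, h) (g', h') \<le> gdist VG EG g g' + gdist VH EH h h'"
    using gdist_le[OF wR hR lR] lenR by simp
  obtain p where sp: "shortest_path (cart_V VG VH) (cart_E EG EH) (g, h) (g', h') p"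
    using exists_shortest[OF wR hR lR] by blast
  have wp: "walk (cart_V VG VH) (cart_E EG EH) p" and hp: "hd p = (g,h)" and lp: "last p = (g', h')"
    and lenp: "length p = Suc (gdist (cart_V VG VH) (cart_E EG EH) (g, h) (g', h'))"
    using sp unfolding shortest_path_def by auto
  obtain pg ph where pr: "walk VG EG pg" "walk VH EH ph" "hd pg = g" "last pg = g'" "hd ph = h" "last ph = h'"
    "length pg + length ph = Suc (length p)"
    using proj[OF wp] hp lp by auto
  have "gdist VG EG g g' \<le> length pg - 1" using gdist_le[OF pr(1,3,4)] .
  moreover have "gdist VH EH h h' \<le> length ph - 1" using gdist_le[OF pr(2,5,6)] .
  moreover have "pg \<noteq> []" "ph \<noteq> []" using pr walk_nonempty by auto
  ultimately have "gdist VG EG g g' + gdist VH EH h h' \<le> gdist (cart_V VG VH) (cart_E EG EH) (g, h) (g', h')"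
    using pr(7) lenp by (cases pg; cases ph) auto
  with le show ?thesis by simp
qed

lemma row_tmv:
  assumes cG: "connected_graph VG EG" and cH: "connected_graph VH EH"
    and Z: "total_mv_set (cart_V VG VH) (cart_E EG EH) Z" and h: "h \<in> VH"
  shows "total_mv_set VG EG {g. (g, h) \<in> Z}"
  unfolding total_mv_set_def
proof (intro conjI ballI)
  show "{g. (g, h) \<in> Z} \<subseteq> VG" using Z unfolding total_mv_set_def by auto
  fix x y assume x: "x \<in> VG" and y: "y \<in> VG"
  obtain p where sp: "shortest_path (cart_V VG VH) (cart_E EG EH) (x, h) (y, h) p"
    and dis: "internal p \<inter> Z = {}"
  proof -
    have "X_visible (cart_V VG VH) (cart_E EG EH) Z (x, h) (y, h)"
      using Z x y h unfolding total_mv_set_def cart_V_def by blast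
    then show ?thesis using that unfolding X_visible_def by blast
  qed
  have wp: "walk (cart_V VG VH) (cart_E EG EH) p" and hp: "hd p = (x,h)" and lp: "last p = (y, h)"
    and lenp: "length p = Suc (gdist VG EG x y)"
    using sp gdist_prod[OF cG cH x y h h] gdist_refl[OF h] unfolding shortest_path_def by auto
  obtain pg ph where pr: "walk VG EG pg" "walk VH EH ph" "hd pg = x" "last pg = y"
    "length pg + length ph = Suc (length p)"
    "length ph = 1 \<longrightarrow> pg = map fst p \<and> (\<forall>v\<in>set p. snd v = snd (hd p))"
    using proj[OF wp] hp lp by auto
  have "gdist VG EG x y \<le> length pg - 1" using gdist_le[OF pr(1,3,4)] .
  moreover have "pg \<noteq> []" "ph \<noteq> []" using pr walk_nonempty by auto
  then have "length pg \<ge> 1" "length ph \<ge> 1" by (auto simp: Suc_le_eq)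
  ultimately have "length ph = 1" using pr(5) lenp by linarith
  then have pg: "pg = map fst p" and sn: "\<forall>v\<in>set p. snd v = h" using pr(6) hp by auto
  have "shortest_path VG EG x y pg"
    unfolding shortest_path_def using pr pg lenp by auto
  moreover have "internal pg \<inter> {g. (g, h) \<in> Z} = {}"
  proof -
    { fix a assume a: "a \<in> internal pg" "(a, h) \<in> Z"
      then have "a \<in> fst ` internal p" using pg by (simp add: internal_map)
      then obtain v where v: "v \<in> internal p" "a = fst v" by blast
      have "v \<in> set p" by (rule subsetD[OF internal_sub v(1)])
      then have "snd v = h" using sn by simp
      then have "v = (a, h)" using v by (cases v) auto
      then have False using v a dis by auto }
    then show ?thesis by auto
  qed
  ultimately show "X_visible VG EG {g. (g, h) \<in> Z} x y" unfolding X_visible_def by blast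
qed

lemma col_tmv:
  assumes cG: "connected_graph VG EG" and cH: "connected_graph VH EH"
    and Z: "total_mv_set (cart_V VG VH) (cart_E EG EH) Z" and g: "g \<in> VG"
  shows "total_mv_set VH EH {h. (g, h) \<in> Z}"
  unfolding total_mv_set_def
proof (intro conjI ballI)
  show "{h. (g, h) \<in> Z} \<subseteq> VH" using Z unfolding total_mv_set_def by auto
  fix x y assume x: "x \<in> VH" and y: "y \<in> VH"
  obtain p where sp: "shortest_path (cart_V VG VH) (cart_E EG EH) (g, x) (g, y) p"
    and dis: "internal p \<inter> Z = {}"
  proof -
    have "X_visible (cart_V VG VH) (cart_E EG EH) Z (g, x) (g, y)"
      using Z x y g unfolding total_mv_set_def cart_V_def by blast
    then show ?thesis using that unfolding X_visible_def by blast
  qed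
  have wp: "walk (cart_V VG VH) (cart_E EG EH) p" and hp: "hd p = (g,x)" and lp: "last p = (g, y)"
    and lenp: "length p = Suc (gdist VH EH x y)"
    using sp gdist_prod[OF cG cH g g x y] gdist_refl[OF g] unfolding shortest_path_def by auto
  obtain pg ph where pr: "walk VG EG pg" "walk VH EH ph" "hd ph = x" "last ph = y"
    "length pg + length ph = Suc (length p)"
    "length pg = 1 \<longrightarrow> ph = map snd p \<and> (\<forall>v\<in>set p. fst v = fst (hd p))"
    using proj[OF wp] hp lp by auto
  have "gdist VH EH x y \<le> length ph - 1" using gdist_le[OF pr(2,3,4)] .
  moreover have "pg \<noteq> []" "ph \<noteq> []" using pr walk_nonempty by auto
  then have "length pg \<ge> 1" "length ph \<ge> 1" by (auto simp: Suc_le_eq)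
  ultimately have "length pg = 1" using pr(5) lenp by linarith
  then have ph: "ph = map snd p" and sn: "\<forall>v\<in>set p. fst v = g" using pr(6) hp by auto
  have "shortest_path VH EH x y ph"
    unfolding shortest_path_def using pr ph lenp by auto
  moreover have "internal ph \<inter> {h. (g, h) \<in> Z} = {}"
  proof -
    { fix a assume a: "a \<in> internal ph" "(g, a) \<in> Z"
      then have "a \<in> snd ` internal p" using ph by (simp add: internal_map)
      then obtain v where v: "v \<in> internal p" "a = snd v" by blast
      have "v \<in> set p" by (rule subsetD[OF internal_sub v(1)])
      then have "fst v = g" using sn by simp
      then have "v = (g, a)" using v by (cases v) auto
      then have False using v a dis by auto }
    then show ?thesis by auto
  qed
  ultimately show "X_visible VH EH {h. (g, h) \<in> Z} x y" unfolding X_visible_def by blast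
qed


lemma prod_tmv:
  assumes cG: "connected_graph VG EG" and cH: "connected_graph VH EH"
    and ind: "independent_set VG EG (simplicial_set VG EG)"
    and Y: "total_mv_set VH EH Y"
  shows "total_mv_set (cart_V VG VH) (cart_E EG EH) (simplicial_set VG EG \<times> Y)"
  unfolding total_mv_set_def
proof (intro conjI ballI)
  let ?S = "simplicial_set VG EG"
  have gG: "graph VG EG" using cG unfolding connected_graph_def by auto
  show "?S \<times> Y \<subseteq> cart_V VG VH"
    using Y unfolding total_mv_set_def simplicial_set_def simplicial_def cart_V_def by auto
  fix x y assume x: "x \<in> cart_V VG VH" and y: "y \<in> cart_V VG VH"
  obtain g h where xe: "x = (g, h)" and g: "g \<in> VG" and h: "h \<in> VH" using x unfolding cart_V_def by auto
  obtain g' h' where ye: "y = (g', h')" and g': "g' \<in> VG" and h': "h' \<in> VH" using y unfolding cart_V_def by auto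
  have dist: "gdist (cart_V VG VH) (cart_E EG EH) (g, h) (g', h') = gdist VG EG g g' + gdist VH EH h h'"
    by (rule gdist_prod[OF cG cH g g' h h'])
  show "X_visible (cart_V VG VH) (cart_E EG EH) (?S \<times> Y) x y"
  proof (cases "g = g'")
    case True
    obtain Q where Q: "shortest_path VH EH h h' Q" and dQ: "internal Q \<inter> Y = {}"
      using Y h h' unfolding total_mv_set_def X_visible_def by blast
    have wQ: "walk VH EH Q" and hQ: "hd Q = h" and lQ: "last Q = h'" and lenQ: "length Q = Suc (gdist VH EH h h')"
      using Q unfolding shortest_path_def by auto
    have Qne: "Q \<noteq> []" using wQ walk_nonempty by auto
    define R where "R = route [] g [] Q"
    have wR: "walk (cart_V VG VH) (cart_E EG EH) R"
      unfolding R_def by (rule route_walk) (use wQ g in auto)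
    have "hd R = (hd ([] @ g # []), hd Q)" "last R = (last ([] @ g # []), last Q)"
      unfolding R_def by (simp only: route_hd[OF Qne], simp only: route_last[OF Qne])
    then have hR: "hd R = (g, h)" and lR: "last R = (g', h')" using hQ lQ True by auto
    have lenR: "length R = Suc (gdist (cart_V VG VH) (cart_E EG EH) (g, h) (g', h'))"
      unfolding R_def route_length using lenQ dist True gdist_refl[OF g] by simp
    have "R = map (\<lambda>b. (g, b)) Q" unfolding R_def route_def by simp
    then have "internal R = (\<lambda>b. (g, b)) ` internal Q" by (simp add: internal_map)
    then have "internal R \<inter> (?S \<times> Y) = {}" using dQ by auto
    then show ?thesis unfolding X_visible_def shortest_path_def xe ye using wR hR lR lenR by blast
  next
    case False
    obtain P where P: "shortest_path VG EG g g' P" using connected_shortest[OF cG g g'] by blast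
    obtain Q where Q: "shortest_path VH EH h h' Q" using connected_shortest[OF cH h h'] by blast
    have wP: "walk VG EG P" and hP: "hd P = g" and lP: "last P = g'" and lenP: "length P = Suc (gdist VG EG g g')"
      using P unfolding shortest_path_def by auto
    have wQ: "walk VH EH Q" and hQ: "hd Q = h" and lQ: "last Q = h'" and lenQ: "length Q = Suc (gdist VH EH h h')"
      using Q unfolding shortest_path_def by auto
    have Qne: "Q \<noteq> []" using wQ walk_nonempty by auto
    have nis: "\<And>v. v \<in> internal P \<Longrightarrow> v \<notin> ?S"
      using simplicial_not_internal[OF gG P] unfolding simplicial_set_def by blast
    obtain P1 u P2 where Pe: "P = P1 @ u # P2" and uS: "u \<notin> ?S"
    proof -
      obtain c rest where P': "P = g # c # rest"
        using wP hP lP False by (cases P; cases "tl P") (auto simp: walk_def)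
      show thesis
      proof (cases rest)
        case Nil
        then have "c = g'" "EG g c" using P' lP wP by auto
        then have "g \<notin> ?S \<or> g' \<notin> ?S" using ind unfolding independent_set_def by blast
        then show thesis
        proof
          assume "g \<notin> ?S" then show thesis using that[of "[]" g "[g']"] P' Nil \<open>c = g'\<close> by simp
        next
          assume "g' \<notin> ?S" then show thesis using that[of "[g]" g' "[]"] P' Nil \<open>c = g'\<close> by simp
        qed
      next
        case (Cons d rest')
        then have "c \<in> internal P" using P' unfolding internal_def by simp
        then show thesis using that[of "[g]" c rest] nis P' by simp
      qed
    qed
    define R where "R = route P1 u P2 Q"
    have wR: "walk (cart_V VG VH) (cart_E EG EH) R"
      unfolding R_def by (rule route_walk) (use wP wQ Pe in auto)
    have "hd R = (hd (P1 @ u # P2), hd Q)" "last R = (last (P1 @ u # P2), last Q)"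
      unfolding R_def by (simp only: route_hd[OF Qne], simp only: route_last[OF Qne])
    then have hR: "hd R = (g, h)" and lR: "last R = (g', h')" using hQ lQ hP lP Pe by auto
    have lenR: "length R = Suc (gdist (cart_V VG VH) (cart_E EG EH) (g, h) (g', h'))"
      unfolding R_def route_length using lenQ dist lenP Pe by simp
    have "internal R \<inter> (?S \<times> Y) = {}"
    proof -
      { fix v assume v: "v \<in> internal R" "v \<in> ?S \<times> Y"
        have "fst v \<in> set (tl P1) \<union> {u} \<union> set (butlast P2)"
          using route_internal[of P1 u P2 Q] v(1) unfolding R_def by blast
        then have "fst v \<in> internal P \<or> fst v = u" using internal_split[of P1 P2 u] Pe by blast
        then have False using nis uS v(2) by auto }
      then show ?thesis by blast
    qed
    then show ?thesis unfolding X_visible_def shortest_path_def xe ye using wR hR lR lenR by blast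
  qed
qed

lemma tmv_sub_S:
  assumes cG: "connected_graph VG EG" and X: "total_mv_set VG EG X"
    and mu: "mu_t VG EG = card (simplicial_set VG EG)"
  shows "X \<subseteq> simplicial_set VG EG"
proof -
  let ?S = "simplicial_set VG EG"
  have gG: "graph VG EG" and fin: "finite VG" using cG unfolding connected_graph_def graph_def by auto
  have SV: "?S \<subseteq> VG" unfolding simplicial_set_def simplicial_def by auto
  have XV: "X \<subseteq> VG" using X unfolding total_mv_set_def by auto
  have "total_mv_set VG EG (X \<union> ?S)"
    unfolding total_mv_set_def
  proof (intro conjI ballI)
    show "X \<union> ?S \<subseteq> VG" using SV XV by auto
    fix x y assume "x \<in> VG" "y \<in> VG"
    then obtain p where sp: "shortest_path VG EG x y p" and d: "internal p \<inter> X = {}"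
      using X unfolding total_mv_set_def X_visible_def by blast
    have "internal p \<inter> ?S = {}"
      using simplicial_not_internal[OF gG sp] unfolding simplicial_set_def by blast
    then show "X_visible VG EG (X \<union> ?S) x y" unfolding X_visible_def using sp d by blast
  qed
  moreover have "finite (card ` {X. total_mv_set VG EG X})"
    by (rule finite_imageI, rule finite_subset[of _ "Pow VG"]) (auto simp: total_mv_set_def fin)
  ultimately have "card (X \<union> ?S) \<le> card ?S"
    unfolding mu[symmetric] mu_t_def by (intro Max_ge) auto
  moreover have "finite (X \<union> ?S)" using SV XV fin finite_subset by blast
  ultimately have "X \<union> ?S = ?S" by (metis card_seteq sup_ge2)
  then show ?thesis by blast
qed


lemma empty_tmv: "connected_graph V E \<Longrightarrow> total_mv_set V E {}"
  unfolding total_mv_set_def X_visible_def using connected_shortest by fastforce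

lemma mu_finite: "finite V \<Longrightarrow> finite (card ` {X. total_mv_set V E X})"
  by (rule finite_imageI, rule finite_subset[of _ "Pow V"]) (auto simp: total_mv_set_def)

theorem theorem5p6:
  fixes VG :: "'a set" and EG :: "'a \<Rightarrow> 'a \<Rightarrow> bool"
    and VH :: "'b set" and EH :: "'b \<Rightarrow> 'b \<Rightarrow> bool"
  assumes "connected_graph VG EG" and "connected_graph VH EH"
    and "independent_set VG EG (simplicial_set VG EG)"
    and "mu_t VG EG = card (simplicial_set VG EG)"
  shows "mu_t (cart_V VG VH) (cart_E EG EH) = mu_t VG EG * mu_t VH EH"
proof -
  note cG = assms(1) and cH = assms(2) and ind = assms(3) and mu = assms(4)
  let ?S = "simplicial_set VG EG"
  have finG: "finite VG" using cG unfolding connected_graph_def graph_def by auto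
  have finH: "finite VH" using cH unfolding connected_graph_def graph_def by auto
  have finP: "finite (cart_V VG VH)" using finG finH unfolding cart_V_def by auto
  have SV: "?S \<subseteq> VG" unfolding simplicial_set_def simplicial_def by auto
  have finS: "finite ?S" using SV finG finite_subset by blast
  have finMH: "finite (card ` {X. total_mv_set VH EH X})" by (rule mu_finite[OF finH])
  have "card ({}::'b set) \<in> card ` {X. total_mv_set VH EH X}" using empty_tmv[OF cH] by (intro imageI) simp
  then have "mu_t VH EH \<in> card ` {X. total_mv_set VH EH X}"
    unfolding mu_t_def using finMH by (intro Max_in) auto
  then obtain Y where Y: "total_mv_set VH EH Y" and cY: "card Y = mu_t VH EH" by auto
  have SY: "total_mv_set (cart_V VG VH) (cart_E EG EH) (?S \<times> Y)"
    by (rule prod_tmv[OF cG cH ind Y])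
  have finY: "finite Y" using Y finH finite_subset unfolding total_mv_set_def by blast
  have cSY: "card (?S \<times> Y) = mu_t VG EG * mu_t VH EH"
    using mu cY by (simp add: card_cartesian_product)
  have bound: "card Z \<le> mu_t VG EG * mu_t VH EH"
    if Z: "total_mv_set (cart_V VG VH) (cart_E EG EH) Z" for Z
  proof -
    have sub: "Z \<subseteq> Sigma ?S (\<lambda>g. {h. (g, h) \<in> Z})"
    proof
      fix v assume v: "v \<in> Z"
      obtain g h where ve: "v = (g, h)" by force
      have "h \<in> VH" using Z v ve unfolding total_mv_set_def cart_V_def by auto
      then have "total_mv_set VG EG {g. (g, h) \<in> Z}" by (rule row_tmv[OF cG cH Z])
      then have "{g. (g, h) \<in> Z} \<subseteq> ?S" by (rule tmv_sub_S[OF cG _ mu])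
      then show "v \<in> Sigma ?S (\<lambda>g. {h. (g, h) \<in> Z})" using v ve by auto
    qed
    have fincol: "finite {h. (g, h) \<in> Z}" for g
    proof -
      have "{h. (g, h) \<in> Z} \<subseteq> snd ` Z" by force
      moreover have "finite Z" using Z finP finite_subset unfolding total_mv_set_def by blast
      ultimately show ?thesis using finite_subset by blast
    qed
    have "card Z \<le> card (Sigma ?S (\<lambda>g. {h. (g, h) \<in> Z}))"
      by (rule card_mono) (use finS fincol sub in auto)
    also have "\<dots> = (\<Sum>g\<in>?S. card {h. (g, h) \<in> Z})"
      by (rule card_SigmaI) (use finS fincol in auto)
    also have "\<dots> \<le> (\<Sum>g\<in>?S. mu_t VH EH)"
    proof (rule sum_mono)
      fix g assume "g \<in> ?S"
      then have "g \<in> VG" using SV by auto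
      then have "total_mv_set VH EH {h. (g, h) \<in> Z}" by (rule col_tmv[OF cG cH Z])
      then show "card {h. (g, h) \<in> Z} \<le> mu_t VH EH"
        unfolding mu_t_def using finMH by (intro Max_ge) auto
    qed
    also have "\<dots> = mu_t VG EG * mu_t VH EH" using mu by simp
    finally show ?thesis .
  qed
  have finMP: "finite (card ` {X. total_mv_set (cart_V VG VH) (cart_E EG EH) X})"
    by (rule mu_finite[OF finP])
  have "card (?S \<times> Y) \<le> mu_t (cart_V VG VH) (cart_E EG EH)"
    unfolding mu_t_def using finMP SY by (intro Max_ge) auto
  then have "mu_t VG EG * mu_t VH EH \<le> mu_t (cart_V VG VH) (cart_E EG EH)" using cSY by simp
  moreover have "mu_t (cart_V VG VH) (cart_E EG EH) \<le> mu_t VG EG * mu_t VH EH"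
    using finMP SY bound by (subst mu_t_def, subst Max_le_iff) auto
  ultimately show ?thesis by simp
qed

end
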